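(* In the setting of the context (with $\rho<1$ and $\mu_l\le\mu_h$): (i) if $F(y_0)\neq0$, then $1<1/\eta_1<y_0$; (ii) $T'(1)<0$.
   Context: Fix $p,q,\mu_h,\mu_l\in(0,1)$ with $p+q+\mu_h+\mu_l=1$ and $\mu_l\le\mu_h$. For real $x$ write $\bar x=1-x$; let $\rho_h=p/\mu_h$, $\rho_l=q/\mu_l$, $\rho=\rho_h+\rho_l$, and assume $\rho<1$. Let $\Delta(y)=(p\mu_h-\bar p\bar\mu_h)^2(qy+\bar q)^2-2(p\mu_h+\bar p\bar\mu_h)(qy+\bar q)+1$, with zeros $y_0<y_1$ given by $y_{0,1}=\frac{p\mu_h+\bar p\bar\mu_h\mp2\sqrt{p\mu_h\bar p\bar\mu_h}}{(p\mu_h-\bar p\bar\mu_h)^2q}-\frac{\bar q}{q}$; $\sqrt{\Delta(y)}$ denotes the branch analytic on $\mathbb{C}\setminus[y_0,y_1]$ that is positive for real $y<y_0$. Let $F(y)=(\bar p+\mu_h-2\bar p\mu_l)qy^2+[(\bar p+\mu_h-2\bar p\mu_l)\bar q+2\bar pq\mu_l-1]y+2\bar p\bar q\mu_l$ and $T(y)=F(y)-y\sqrt{\Delta(y)}$. Let $\eta_1=\frac{(1-\mu_h\bar q-\bar p\bar q\bar\mu_l-\bar pq\mu_l)+\sqrt{(1-\mu_h\bar q-\bar p\bar q\bar\mu_l-\bar pq\mu_l)^2+4\bar p\bar q(\mu_h-\bar p\mu_l)\bar\mu_lq}}{2\bar p\bar q\mu_l}$. *)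

theory Defs
  imports Complex_Main
begin

definition Delta :: "real \<Rightarrow> real \<Rightarrow> real \<Rightarrow> real \<Rightarrow> real \<Rightarrow> real" where
  "Delta p q mh ml y =
     (p*mh - (1-p)*(1-mh))^2 * (q*y + (1-q))^2 - 2*(p*mh + (1-p)*(1-mh))*(q*y + (1-q)) + 1"

definition y0 :: "real \<Rightarrow> real \<Rightarrow> real \<Rightarrow> real \<Rightarrow> real" where
  "y0 p q mh ml =
     (p*mh + (1-p)*(1-mh) - 2*sqrt (p*mh*(1-p)*(1-mh))) / ((p*mh - (1-p)*(1-mh))^2 * q)
     - (1-q)/q"

definition y1 :: "real \<Rightarrow> real \<Rightarrow> real \<Rightarrow> real \<Rightarrow> real" where
  "y1 p q mh ml =
     (p*mh + (1-p)*(1-mh) + 2*sqrt (p*mh*(1-p)*(1-mh))) / ((p*mh - (1-p)*(1-mh))^2 * q)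
     - (1-q)/q"

definition Fpoly :: "real \<Rightarrow> real \<Rightarrow> real \<Rightarrow> real \<Rightarrow> real \<Rightarrow> real" where
  "Fpoly p q mh ml y =
     ((1-p) + mh - 2*(1-p)*ml)*q*y^2
     + (((1-p) + mh - 2*(1-p)*ml)*(1-q) + 2*(1-p)*q*ml - 1)*y
     + 2*(1-p)*(1-q)*ml"

text \<open>T(y) = F(y) - y sqrt(Delta(y)). On real y < y0 the chosen branch of sqrt(Delta)
  is the positive real square root, so T is rendered as a real function there.\<close>
definition Tfun :: "real \<Rightarrow> real \<Rightarrow> real \<Rightarrow> real \<Rightarrow> real \<Rightarrow> real" where
  "Tfun p q mh ml y = Fpoly p q mh ml y - y * sqrt (Delta p q mh ml y)"

definition eta1 :: "real \<Rightarrow> real \<Rightarrow> real \<Rightarrow> real \<Rightarrow> real" where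
  "eta1 p q mh ml =
     (let a = 1 - mh*(1-q) - (1-p)*(1-q)*(1-ml) - (1-p)*q*ml
      in (a + sqrt (a^2 + 4*(1-p)*(1-q)*(mh - (1-p)*ml)*(1-ml)*q)) / (2*(1-p)*(1-q)*ml))"

end

theory Submission
  imports Defs
begin

lemma HGlem: "(Fpoly p q mh (1-p-q-mh) y)^2 - y^2 * Delta p q mh (1-p-q-mh) y = 4*(1-p)*(y-1)*(q*y+1-q) * ((mh - (1-p)*(1-p-q-mh))*(1-(1-p-q-mh))*q*y^2 + (1-p-q-mh)*(1 - mh*(1-q) - (1-p)*(1-q)*(1-(1-p-q-mh)) - (1-p)*q*(1-p-q-mh))*y - (1-p-q-mh)*((1-p)*(1-q)*(1-p-q-mh)))"
  unfolding Fpoly_def Delta_def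
  by algebra

lemma Tderiv:
  fixes p q mh ml :: real
  assumes "Delta p q mh ml 1 > 0"
  shows "(Tfun p q mh ml has_real_derivative
     (2*((1-p) + mh - 2*(1-p)*ml)*q + (((1-p) + mh - 2*(1-p)*ml)*(1-q) + 2*(1-p)*q*ml - 1)
      - (sqrt (Delta p q mh ml 1) + (2*q*((p*mh - (1-p)*(1-mh))^2 - (p*mh + (1-p)*(1-mh)))) / (2*sqrt (Delta p q mh ml 1))))) (at 1)"
proof -
  have e: "Tfun p q mh ml = (\<lambda>y. Fpoly p q mh ml y - y * sqrt (Delta p q mh ml y))"
    by (simp add: Tfun_def fun_eq_iff)
  have dD: "((\<lambda>y. Delta p q mh ml y) has_real_derivative (2*q*((p*mh - (1-p)*(1-mh))^2 - (p*mh + (1-p)*(1-mh))))) (at 1)"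
    unfolding Delta_def
    by (rule derivative_eq_intros refl | simp)+ (simp add: algebra_simps)
  have dF: "((\<lambda>y. Fpoly p q mh ml y) has_real_derivative (2*((1-p) + mh - 2*(1-p)*ml)*q + (((1-p) + mh - 2*(1-p)*ml)*(1-q) + 2*(1-p)*q*ml - 1))) (at 1)"
    unfolding Fpoly_def
    by (auto intro!: derivative_eq_intros simp: algebra_simps)
  have dS: "((\<lambda>y. sqrt (Delta p q mh ml y)) has_real_derivative (inverse (sqrt (Delta p q mh ml 1)) / 2 * (2*q*((p*mh - (1-p)*(1-mh))^2 - (p*mh + (1-p)*(1-mh)))))) (at 1)"
    using DERIV_chain2[OF DERIV_real_sqrt[OF assms] dD] .
  have dP: "((\<lambda>y. y * sqrt (Delta p q mh ml y)) has_real_derivative (1 * sqrt (Delta p q mh ml 1) + 1 * (inverse (sqrt (Delta p q mh ml 1)) / 2 * (2*q*((p*mh - (1-p)*(1-mh))^2 - (p*mh + (1-p)*(1-mh))))))) (at 1)"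
    using DERIV_mult[OF DERIV_ident dS] by simp
  have eq: "\<And>S X::real. 1 * S + 1 * (inverse S / 2 * X) = S + X / (2*S)"
    by (simp add: field_simps)
  show ?thesis unfolding e
    using DERIV_diff[OF dF dP] unfolding eq .
qed

theorem lemma4p1:
  fixes p q mh ml :: real
  assumes "0 < p" "p < 1" "0 < q" "q < 1" "0 < mh" "mh < 1" "0 < ml" "ml < 1"
    and "p + q + mh + ml = 1"
    and "ml \<le> mh"
    and "p/mh + q/ml < 1"
  shows "(Fpoly p q mh ml (y0 p q mh ml) \<noteq> 0 \<longrightarrow>
            1 < 1 / eta1 p q mh ml \<and> 1 / eta1 p q mh ml < y0 p q mh ml)
         \<and> (\<exists>D. (Tfun p q mh ml has_real_derivative D) (at 1) \<and> D < 0)"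
proof -
  have ml_eq: "ml = 1 - p - q - mh" using assms(9) by linarith
  have Rpos: "mh*ml - p*ml - q*mh > 0"
  proof -
    have "(p/mh + q/ml) * (mh*ml) < 1 * (mh*ml)"
      using assms by (intro mult_strict_right_mono) auto
    also have "(p/mh + q/ml) * (mh*ml) = p*ml + q*mh" using assms by (simp add: field_simps)
    finally show ?thesis by simp
  qed
  have pm: "p < mh"
  proof -
    have "q/ml > 0" using assms by simp
    hence "p/mh < 1" using assms(11) by linarith
    thus ?thesis using assms by (simp add: divide_less_eq)
  qed
  have D1: "Delta p q mh ml 1 = (mh - p)^2"
    unfolding Delta_def by (simp add: power2_eq_square algebra_simps)
  have sD1: "sqrt (Delta p q mh ml 1) = mh - p"
    using D1 pm by simp
  define D where "D = 2*((1-p) + mh - 2*(1-p)*ml)*q + (((1-p) + mh - 2*(1-p)*ml)*(1-q) + 2*(1-p)*q*ml - 1)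
      - (sqrt (Delta p q mh ml 1) + (2*q*((p*mh - (1-p)*(1-mh))^2 - (p*mh + (1-p)*(1-mh)))) / (2*sqrt (Delta p q mh ml 1)))"
  have dT: "(Tfun p q mh ml has_real_derivative D) (at 1)"
    unfolding D_def using Tderiv[of p q mh ml] D1 pm by simp
  have "2*(mh-p)*D = 2*(mh-p)*(2*((1-p) + mh - 2*(1-p)*ml)*q + (((1-p) + mh - 2*(1-p)*ml)*(1-q) + 2*(1-p)*q*ml - 1) - (mh-p))
         - 2*q*((p*mh - (1-p)*(1-mh))^2 - (p*mh + (1-p)*(1-mh)))"
    unfolding D_def sD1 using pm by (simp add: field_simps)
  also have "\<dots> = -4*(1-p)*(mh*ml - p*ml - q*mh)"
    unfolding ml_eq by (simp add: power2_eq_square algebra_simps)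
  finally have "2*(mh-p)*D = -4*(1-p)*(mh*ml - p*ml - q*mh)" .
  moreover have "(1-p)*(mh*ml - p*ml - q*mh) > 0" using Rpos assms by (intro mult_pos_pos) auto
  hence "-4*(1-p)*(mh*ml - p*ml - q*mh) < 0" by linarith
  ultimately have "D < 0" using pm
    by (metis mult_pos_pos neg_0_less_iff_less zero_less_mult_pos mult_less_0_iff not_less_iff_gr_or_eq diff_gt_0_iff_gt zero_less_numeral)
  have part2: "\<exists>D. (Tfun p q mh ml has_real_derivative D) (at 1) \<and> D < 0"
    using dT \<open>D < 0\<close> by blast
  define a where "a = p*mh"
  define b where "b = (1-p)*(1-mh)"
  define r where "r = sqrt (a*b)"
  define d where "d = (a-b)^2"
  have apos: "a > 0" and bpos: "b > 0" using assms by (auto simp: a_def b_def)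
  have r0: "r \<ge> 0" and r2: "r^2 = a*b" using apos bpos by (auto simp: r_def)
  have amb: "a - b = p + mh - 1" by (simp add: a_def b_def algebra_simps)
  have dpos: "d > 0" unfolding d_def amb using assms pm by simp
  have h1: "(a+b-2*r)*(a+b+2*r) = d" unfolding d_def using r2 by (simp add: power2_eq_square algebra_simps)
  have s1: "a+b-2*r > 0"
  proof -
    have "a+b+2*r > 0" using apos bpos r0 by simp
    thus ?thesis using h1 dpos by (metis zero_less_mult_pos2)
  qed
  have h2: "(1-a-b-2*r)*(1-a-b+2*r) = (mh-p)^2"
    using r2 by (simp add: a_def b_def power2_eq_square algebra_simps)
  have s2: "1-a-b-2*r > 0"
  proof -
    have "1-a-b = p*(1-mh) + mh*(1-p)" by (simp add: a_def b_def algebra_simps)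
    also have "\<dots> > 0" using assms by (intro add_pos_pos mult_pos_pos) auto
    finally have "1-a-b+2*r > 0" using r0 by linarith
    moreover have "(mh-p)^2 > 0" using pm by simp
    ultimately show ?thesis using h2 by (metis zero_less_mult_pos2)
  qed
  define Y where "Y = y0 p q mh ml"
  define s0 where "s0 = (a+b-2*r)/d"
  have Ys: "q*Y + (1-q) = s0"
    unfolding Y_def y0_def s0_def using assms
    by (simp add: a_def b_def r_def d_def field_simps mult.assoc)
  have s0d: "s0*d = a+b-2*r" unfolding s0_def using dpos by simp
  have s0gt: "s0 > 1"
  proof -
    have "(a+b-2*r) - d = (a+b-2*r)*(1-a-b-2*r)" using h1 by (simp add: algebra_simps)
    also have "\<dots> > 0" using s1 s2 by simp
    finally have "a+b-2*r > d" by simp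
    thus ?thesis unfolding s0_def using dpos by simp
  qed
  have Ygt: "Y > 1"
  proof -
    have "q*Y > q*1" using Ys s0gt by simp
    thus ?thesis using assms by simp
  qed
  have DY: "Delta p q mh ml Y = 0"
  proof -
    have "Delta p q mh ml Y = d*s0^2 - 2*(a+b)*s0 + 1"
      unfolding Delta_def Ys[symmetric] by (simp add: d_def a_def b_def)
    also have "\<dots> = s0*(s0*d) - 2*(a+b)*s0 + 1" by (simp add: power2_eq_square algebra_simps)
    also have "\<dots> = s0*(a+b-2*r) - 2*(a+b)*s0 + 1" by (simp only: s0d)
    also have "\<dots> = 1 - s0*(a+b+2*r)" by (simp add: algebra_simps)
    also have "s0*(a+b+2*r) = 1" unfolding s0_def using h1 dpos by (simp add: field_simps)
    finally show ?thesis by simp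
  qed
  define Aa where "Aa = 1 - mh*(1-q) - (1-p)*(1-q)*(1-ml) - (1-p)*q*ml"
  define K where "K = (1-p)*(1-q)*ml"
  define Gc where "Gc = (mh - (1-p)*ml)*(1-ml)*q"
  define W where "W = (1-p)*(1-q)*(mh - (1-p)*ml)*(1-ml)*q"
  define G where "G = (\<lambda>y::real. Gc*y^2 + ml*Aa*y - ml*K)"
  have Kpos: "K > 0" using assms by (simp add: K_def)
  have Gcpos: "Gc > 0"
  proof -
    have "(1-p)*ml < mh" using assms
      by (smt (verit) mult_less_cancel_right2)
    thus ?thesis unfolding Gc_def using assms by simp
  qed
  have Wpos: "W > 0" using Gcpos assms unfolding W_def Gc_def
    by (metis (no_types, opaque_lifting) diff_gt_0_iff_gt mult.assoc mult_pos_pos)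
  have HG: "\<And>y. (Fpoly p q mh ml y)^2 - y^2 * Delta p q mh ml y = 4*(1-p)*(y-1)*(q*y+1-q) * G y"
    unfolding G_def Gc_def Aa_def K_def using HGlem[of p q mh] unfolding ml_eq[symmetric] .
  have conv: "\<And>v w. w*G v - (w-v)*G 0 - v*G w = Gc*v*w*(v-w)"
    unfolding G_def by (simp add: power2_eq_square algebra_simps)
  have G0: "G 0 < 0" unfolding G_def using Kpos assms by simp
  have G1: "G 1 = p*ml + q*mh - mh*ml"
    unfolding G_def Gc_def Aa_def K_def ml_eq by (simp add: algebra_simps)
  have G1neg: "G 1 < 0" using G1 Rpos by simp
  define sq where "sq = sqrt (Aa^2 + 4*W)"
  have sq2: "sq^2 = Aa^2 + 4*W" unfolding sq_def using Wpos
    by (simp add: add_nonneg_nonneg)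
  have sqA: "Aa < sq" unfolding sq_def using Wpos by (intro real_less_rsqrt) simp
  have sqA': "-Aa < sq" unfolding sq_def using Wpos by (intro real_less_rsqrt) simp
  have eta: "eta1 p q mh ml = (Aa + sq)/(2*K)"
    unfolding eta1_def Let_def sq_def Aa_def K_def W_def by (simp only: mult.assoc)
  define z where "z = 1 / eta1 p q mh ml"
  have AS: "Aa + sq > 0" using sqA' by linarith
  have zdef: "z = 2*K/(Aa+sq)" unfolding z_def eta by simp
  have zpos: "z > 0" unfolding zdef using Kpos AS by simp
  have Gz: "G z = 0"
  proof -
    have zu: "z*(Aa+sq) = 2*K" unfolding zdef using AS by simp
    have "(Aa+sq)^2 * (W*z^2 + K*Aa*z - K^2) = W*(z*(Aa+sq))^2 + K*Aa*(z*(Aa+sq))*(Aa+sq) - K^2*(Aa+sq)^2"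
      by (simp add: power2_eq_square algebra_simps)
    also have "\<dots> = W*(2*K)^2 + K*Aa*(2*K)*(Aa+sq) - K^2*(Aa+sq)^2" by (simp only: zu)
    also have "\<dots> = K^2*(4*W + Aa^2 - sq^2)" by (simp add: power2_eq_square algebra_simps)
    also have "\<dots> = 0" using sq2 by simp
    finally have "(Aa+sq)^2 * (W*z^2 + K*Aa*z - K^2) = 0" .
    hence e0: "W*z^2 + K*Aa*z - K^2 = 0" using AS by simp
    have "(1-p)*(1-q)*G z = W*z^2 + K*Aa*z - K^2"
      unfolding G_def W_def K_def Gc_def by (simp add: power2_eq_square algebra_simps)
    hence "(1-p)*(1-q)*G z = 0" using e0 by simp
    thus ?thesis using assms by simp
  qed
  have z1: "1 < z"
  proof (rule ccontr)
    assume "\<not> 1 < z"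
    hence "z \<le> 1" by simp
    have "1*G z - (1-z)*G 0 - z*G 1 = Gc*z*1*(z-1)" using conv[of 1 z] .
    hence "(1-z)*G 0 + z*G 1 = - Gc*z*(z-1)" using Gz by simp
    moreover have "(1-z)*G 0 \<le> 0" using G0 \<open>z \<le> 1\<close> by (simp add: mult_nonneg_nonpos)
    moreover have "z*G 1 < 0" using zpos G1neg by (simp add: mult_pos_neg)
    moreover have "Gc*z*(z-1) \<le> 0" using Gcpos zpos \<open>z \<le> 1\<close>
      by (simp add: mult_nonneg_nonpos)
    ultimately show False by linarith
  qed
  have part1: "Fpoly p q mh ml Y \<noteq> 0 \<longrightarrow> 1 < z \<and> z < Y"
  proof
    assume FY: "Fpoly p q mh ml Y \<noteq> 0"
    have "4*(1-p)*(Y-1)*(q*Y+1-q) * G Y > 0"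
    proof -
      have "0 < (Fpoly p q mh ml Y)^2" using FY by simp
      also have "\<dots> = 4*(1-p)*(Y-1)*(q*Y+1-q) * G Y" using HG[of Y] DY by simp
      finally show ?thesis .
    qed
    moreover have "4*(1-p)*(Y-1)*(q*Y+1-q) > 0"
      using assms Ygt Ys s0gt by simp
    ultimately have GY: "G Y > 0" by (metis zero_less_mult_pos)
    have "z < Y"
    proof (rule ccontr)
      assume "\<not> z < Y"
      hence "Y \<le> z" by simp
      have "z*G Y - (z-Y)*G 0 - Y*G z = Gc*Y*z*(Y-z)" using conv[of z Y] .
      hence "z*G Y = (z-Y)*G 0 + Gc*Y*z*(Y-z)" using Gz by simp
      moreover have "(z-Y)*G 0 \<le> 0" using G0 \<open>Y \<le> z\<close> by (simp add: mult_nonneg_nonpos)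
      moreover have "Gc*Y*z*(Y-z) \<le> 0" using Gcpos zpos Ygt \<open>Y \<le> z\<close>
        by (simp add: mult_nonneg_nonpos)
      moreover have "z*G Y > 0" using zpos GY by simp
      ultimately show False by linarith
    qed
    thus "1 < z \<and> z < Y" using z1 by simp
  qed
  show ?thesis using part1 part2 unfolding z_def Y_def by blast
qed
end
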